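(* Let $(\mathcal A,\varphi,\mathcal F,\Phi)$ be a ncps of type B$'$ with associated infinitesimal ncps $(\mathcal B,\varphi,\varphi')$. Let $a\in\mathcal A$ and $f\in\mathcal F$ be such that (unital subalgebra generated by $a$, subalgebra generated by $f$) is cyclic-antimonotone independent. Let $\mu$ be the distribution of $a$ with respect to $\varphi$ and $\nu$ the distribution of $f$ with respect to $\varphi'$. Then the infinitesimal distribution of $a+f$ with respect to $(\varphi,\varphi')$ is $(\mu,\tilde\nu)$, where $\tilde\nu$ (the cyclic-antimonotone convolution of $\mu$ and $\nu$) equals the second component of the infinitesimal free convolution $(\mu,0)\boxplus(\delta_0,\nu)$, and is characterized by $$G_{\tilde\nu}(z)=G_\nu(F_\mu(z))\,F_\mu'(z)$$ as formal series.
   Context: A ncps of type B$'$ is $(\mathcal A,\varphi,\mathcal F,\Phi)$: $\mathcal A$ unital complex algebra, $\varphi$ linear on $\mathcal A$ with $\varphi(1_{\mathcal A})=1$, $\mathcal F$ an algebra that is an $\mathcal A$-bimodule compatible with its multiplication, $\Phi:\mathcal F\to\mathbb C$ linear. $\mathcal B=\mathcal A\oplus\mathcal F$ with product $(a_1,f_1)(a_2,f_2)=(a_1a_2,a_1f_2+f_1a_2+f_1f_2)$, unit $1_{\mathcal A}$; $\varphi(a+f):=\varphi(a)$, $\varphi'(a+f):=\Phi(f)$. Cyclic-antimonotone independence of $(\mathcal A_1,\mathcal F_1)$: $\Phi(a_0f_1a_1\cdots a_{n-1}f_na_n)=\varphi(a_0a_n)\prod_{i=1}^{n-1}\varphi(a_i)\,\Phi(f_1\cdots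 f_n)$ for $n\ge1$, $a_l\in\mathcal A_1$, $f_l\in\mathcal F_1$. A distribution is a linear functional $\mathbb C[x]\to\mathbb C$. The distribution of $b$ w.r.t. a functional $\omega$ is $x^n\mapsto\omega(b^n)$ ($b^0=1_{\mathcal B}$); the infinitesimal distribution of $b$ w.r.t. $(\varphi,\varphi')$ is the pair of its distributions w.r.t. $\varphi$ and $\varphi'$. $\delta_0$ is the distribution with $\delta_0(x^n)=\delta_{n,0}$. For a distribution $\mu$, $G_\mu(z)=\sum_{n\ge0}\mu(x^n)z^{-n-1}$ and $F_\mu=1/G_\mu$ (formal Laurent series), $F_\mu'$ its formal derivative. Infinitesimal freeness in an infinitesimal ncps $(\mathcal B,\varphi,\varphi')$ (with $\varphi(1)=1,\varphi'(1)=0$): unital subalgebras $(\mathcal B_i)$ are infinitesimally free if for alternating indices $i_1\ne i_2\ne\cdots\ne i_n$ and $b_l\in\mathcal B_{i_l}$ with $\varphi(b_l)=0$: $\varphi(b_1\cdots b_n)=0$ and $\varphi'(b_1\cdots b_n)=\varphi(b_1b_n)\varphi(b_2b_{n-1})\cdots\varphi'(b_{(n+1)/2})$ if $n$ odd and $i_1=i_n,i_2=i_{n-1},\dots$, and $0$ otherwise. The infinitesimal free convolution $(\mu_1,\mu_1')\boxplus(\mu_2,\mu_2')$ is the infinitesimal distribution of $b_1+b_2$ where $b_1,b_2$ generate infinitesimally free unital subalgebras in some infinitesimal ncps and have infinitesimal distributions $(\mu_1,\mu_1')$, $(\mu_2,\mu_2')$ (this is well defined). *)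

theory Defs
  imports Complex_Main "HOL-Computational_Algebra.Formal_Laurent_Series"
begin

definition is_calg :: "(complex \<Rightarrow> 'a::ring \<Rightarrow> 'a) \<Rightarrow> bool" where
  "is_calg sc \<longleftrightarrow>
     (\<forall>c x y. sc c (x + y) = sc c x + sc c y) \<and>
     (\<forall>c d x. sc (c + d) x = sc c x + sc d x) \<and>
     (\<forall>c d x. sc (c * d) x = sc c (sc d x)) \<and>
     (\<forall>x. sc 1 x = x) \<and>
     (\<forall>c x y. sc c (x * y) = sc c x * y) \<and>
     (\<forall>c x y. sc c (x * y) = x * sc c y)"

definition clinear_fun :: "(complex \<Rightarrow> 'a::ring \<Rightarrow> 'a) \<Rightarrow> ('a \<Rightarrow> complex) \<Rightarrow> bool" where
  "clinear_fun sc \<omega> \<longleftrightarrow> (\<forall>x y. \<omega> (x + y) = \<omega> x + \<omega> y) \<and> (\<forall>c x. \<omega> (sc c x) = c * \<omega> x)"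

definition is_compat_bimodule ::
  "(complex \<Rightarrow> 'a::ring_1 \<Rightarrow> 'a) \<Rightarrow> (complex \<Rightarrow> 'f::ring \<Rightarrow> 'f) \<Rightarrow>
   ('a \<Rightarrow> 'f \<Rightarrow> 'f) \<Rightarrow> ('f \<Rightarrow> 'a \<Rightarrow> 'f) \<Rightarrow> bool" where
  "is_compat_bimodule sa sf lm rm \<longleftrightarrow>
     (\<forall>a b x. lm (a * b) x = lm a (lm b x)) \<and> (\<forall>x. lm 1 x = x) \<and>
     (\<forall>a b x. lm (a + b) x = lm a x + lm b x) \<and> (\<forall>a x y. lm a (x + y) = lm a x + lm a y) \<and>
     (\<forall>c a x. lm (sa c a) x = sf c (lm a x)) \<and> (\<forall>c a x. lm a (sf c x) = sf c (lm a x)) \<and>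
     (\<forall>a b x. rm x (a * b) = rm (rm x a) b) \<and> (\<forall>x. rm x 1 = x) \<and>
     (\<forall>a b x. rm x (a + b) = rm x a + rm x b) \<and> (\<forall>a x y. rm (x + y) a = rm x a + rm y a) \<and>
     (\<forall>c a x. rm x (sa c a) = sf c (rm x a)) \<and> (\<forall>c a x. rm (sf c x) a = sf c (rm x a)) \<and>
     (\<forall>a b x. rm (lm a x) b = lm a (rm x b)) \<and>
     (\<forall>a x y. lm a (x * y) = lm a x * y) \<and>
     (\<forall>a x y. rm (x * y) a = x * rm y a) \<and>
     (\<forall>a x y. rm x a * y = x * lm a y)"

definition ncps_typeB' ::
  "(complex \<Rightarrow> 'a::ring_1 \<Rightarrow> 'a) \<Rightarrow> ('a \<Rightarrow> complex) \<Rightarrow>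
   (complex \<Rightarrow> 'f::ring \<Rightarrow> 'f) \<Rightarrow> ('a \<Rightarrow> 'f \<Rightarrow> 'f) \<Rightarrow> ('f \<Rightarrow> 'a \<Rightarrow> 'f) \<Rightarrow>
   ('f \<Rightarrow> complex) \<Rightarrow> bool" where
  "ncps_typeB' sa \<phi> sf lm rm \<Phi> \<longleftrightarrow>
     is_calg sa \<and> is_calg sf \<and> is_compat_bimodule sa sf lm rm \<and>
     clinear_fun sa \<phi> \<and> \<phi> 1 = 1 \<and> clinear_fun sf \<Phi>"

text \<open>Elements of B are pairs (a, f) standing for a + f.\<close>
definition bmul :: "('a::ring_1 \<Rightarrow> 'f::ring \<Rightarrow> 'f) \<Rightarrow> ('f \<Rightarrow> 'a \<Rightarrow> 'f) \<Rightarrow>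
    'a \<times> 'f \<Rightarrow> 'a \<times> 'f \<Rightarrow> 'a \<times> 'f" where
  "bmul lm rm x y = (fst x * fst y, lm (fst x) (snd y) + rm (snd x) (fst y) + snd x * snd y)"

fun bpow :: "('a::ring_1 \<Rightarrow> 'f::ring \<Rightarrow> 'f) \<Rightarrow> ('f \<Rightarrow> 'a \<Rightarrow> 'f) \<Rightarrow>
    'a \<times> 'f \<Rightarrow> nat \<Rightarrow> 'a \<times> 'f" where
  "bpow lm rm x 0 = (1, 0)"
| "bpow lm rm x (Suc n) = bmul lm rm (bpow lm rm x n) x"

definition phiB :: "('a \<Rightarrow> complex) \<Rightarrow> 'a \<times> 'f \<Rightarrow> complex" where
  "phiB \<phi> x = \<phi> (fst x)"

definition phiB' :: "('f \<Rightarrow> complex) \<Rightarrow> 'a \<times> 'f \<Rightarrow> complex" where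
  "phiB' \<Phi> x = \<Phi> (snd x)"

inductive_set ualg_gen :: "(complex \<Rightarrow> 'a::ring_1 \<Rightarrow> 'a) \<Rightarrow> 'a \<Rightarrow> 'a set"
  for sc :: "complex \<Rightarrow> 'a \<Rightarrow> 'a" and g :: 'a where
  one: "1 \<in> ualg_gen sc g"
| gen: "g \<in> ualg_gen sc g"
| add: "x \<in> ualg_gen sc g \<Longrightarrow> y \<in> ualg_gen sc g \<Longrightarrow> x + y \<in> ualg_gen sc g"
| mult: "x \<in> ualg_gen sc g \<Longrightarrow> y \<in> ualg_gen sc g \<Longrightarrow> x * y \<in> ualg_gen sc g"
| scal: "x \<in> ualg_gen sc g \<Longrightarrow> sc c x \<in> ualg_gen sc g"

inductive_set alg_gen :: "(complex \<Rightarrow> 'f::ring \<Rightarrow> 'f) \<Rightarrow> 'f \<Rightarrow> 'f set"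
  for sc :: "complex \<Rightarrow> 'f \<Rightarrow> 'f" and g :: 'f where
  gen: "g \<in> alg_gen sc g"
| add: "x \<in> alg_gen sc g \<Longrightarrow> y \<in> alg_gen sc g \<Longrightarrow> x + y \<in> alg_gen sc g"
| mult: "x \<in> alg_gen sc g \<Longrightarrow> y \<in> alg_gen sc g \<Longrightarrow> x * y \<in> alg_gen sc g"
| scal: "x \<in> alg_gen sc g \<Longrightarrow> sc c x \<in> alg_gen sc g"

fun fprod :: "(nat \<Rightarrow> 'f::ring) \<Rightarrow> nat \<Rightarrow> 'f" where
  "fprod f 0 = 0"
| "fprod f (Suc 0) = f 1"
| "fprod f (Suc (Suc n)) = fprod f (Suc n) * f (Suc (Suc n))"

fun alt_word :: "('a::ring_1 \<Rightarrow> 'f::ring \<Rightarrow> 'f) \<Rightarrow> ('f \<Rightarrow> 'a \<Rightarrow> 'f) \<Rightarrow>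
    (nat \<Rightarrow> 'a) \<Rightarrow> (nat \<Rightarrow> 'f) \<Rightarrow> nat \<Rightarrow> 'f" where
  "alt_word lm rm a f 0 = 0"
| "alt_word lm rm a f (Suc 0) = rm (lm (a 0) (f 1)) (a 1)"
| "alt_word lm rm a f (Suc (Suc n)) =
     rm (alt_word lm rm a f (Suc n) * f (Suc (Suc n))) (a (Suc (Suc n)))"

definition cyc_antimono_indep ::
  "('a::ring_1 \<Rightarrow> 'f::ring \<Rightarrow> 'f) \<Rightarrow> ('f \<Rightarrow> 'a \<Rightarrow> 'f) \<Rightarrow> ('a \<Rightarrow> complex) \<Rightarrow>
   ('f \<Rightarrow> complex) \<Rightarrow> 'a set \<Rightarrow> 'f set \<Rightarrow> bool" where
  "cyc_antimono_indep lm rm \<phi> \<Phi> A1 F1 \<longleftrightarrow>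
     (\<forall>n \<ge> 1. \<forall>a f. (\<forall>l \<le> n. a l \<in> A1) \<and> (\<forall>l \<in> {1..n}. f l \<in> F1) \<longrightarrow>
        \<Phi> (alt_word lm rm a f n) =
          \<phi> (a 0 * a n) * (\<Prod>i = 1..n-1. \<phi> (a i)) * \<Phi> (fprod f n))"

definition inf_ncps :: "(complex \<Rightarrow> 'c::ring_1 \<Rightarrow> 'c) \<Rightarrow> ('c \<Rightarrow> complex) \<Rightarrow> ('c \<Rightarrow> complex) \<Rightarrow> bool" where
  "inf_ncps sc \<psi> \<psi>' \<longleftrightarrow> is_calg sc \<and> clinear_fun sc \<psi> \<and> clinear_fun sc \<psi>' \<and> \<psi> 1 = 1 \<and> \<psi>' 1 = 0"

definition inf_free :: "('c::ring_1 \<Rightarrow> complex) \<Rightarrow> ('c \<Rightarrow> complex) \<Rightarrow> ('i \<Rightarrow> 'c set) \<Rightarrow> bool" where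
  "inf_free \<psi> \<psi>' S \<longleftrightarrow>
     (\<forall>n \<ge> 1. \<forall>(ix :: nat \<Rightarrow> 'i) (b :: nat \<Rightarrow> 'c).
        (\<forall>l. 1 \<le> l \<and> l < n \<longrightarrow> ix l \<noteq> ix (Suc l)) \<and>
        (\<forall>l \<in> {1..n}. b l \<in> S (ix l) \<and> \<psi> (b l) = 0) \<longrightarrow>
          \<psi> (prod_list (map b [1..<Suc n])) = 0 \<and>
          \<psi>' (prod_list (map b [1..<Suc n])) =
            (if odd n \<and> (\<forall>l \<in> {1..n}. ix l = ix (Suc n - l))
             then (\<Prod>l = 1..(n - 1) div 2. \<psi> (b l * b (Suc n - l))) * \<psi>' (b ((n + 1) div 2))
             else 0))"

text \<open>A distribution (linear functional on C[x]) is represented by its moment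
sequence mu n = mu(x^n). Formal series in z with finitely many positive and
possibly infinitely many negative powers of z are represented as formal Laurent
series in the variable w = 1/z (type complex fls).\<close>

definition Gser :: "(nat \<Rightarrow> complex) \<Rightarrow> complex fls" where
  "Gser \<mu> = fps_to_fls (fps_X * Abs_fps \<mu>)"   (* sum_n mu(x^n) z^(-n-1) *)

definition Fser :: "(nat \<Rightarrow> complex) \<Rightarrow> complex fls" where
  "Fser \<mu> = inverse (Gser \<mu>)"

text \<open>Formal derivative with respect to z: d/dz = - w^2 d/dw.\<close>
definition zderiv :: "complex fls \<Rightarrow> complex fls" where
  "zderiv F = - (fls_X ^ 2 * fls_deriv F)"

text \<open>Substitution z := F(z) into a series g in z, where F = z + (lower order):
in the variable w this is substituting w := 1/F(z), a power series in w
without constant term.\<close>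
definition subst_z :: "complex fls \<Rightarrow> complex fls \<Rightarrow> complex fls" where
  "subst_z g F = fls_compose_fps g (fls_regpart (inverse F))"

end

theory Submission
  imports Defs
begin

lemma calg_0_left: "is_calg sc \<Longrightarrow> sc 0 x = 0"
proof -
  assume h: "is_calg sc"
  have "sc (0+0) x = sc 0 x + sc 0 x" using h unfolding is_calg_def by blast
  then show ?thesis by simp
qed

lemma calg_mult_left: "is_calg sc \<Longrightarrow> sc c x * y = sc c (x * y)"
  unfolding is_calg_def by metis

lemma calg_mult_right: "is_calg sc \<Longrightarrow> x * sc c y = sc c (x * y)"
  unfolding is_calg_def by metis

lemma calg_neg: "is_calg sc \<Longrightarrow> sc (-c) x = - sc c x"
proof -
  assume h: "is_calg sc"
  have "sc (c + -c) x = sc c x + sc (-c) x" using h unfolding is_calg_def by blast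
  then have "sc c x + sc (-c) x = 0" using calg_0_left[OF h] by simp
  then show ?thesis using minus_unique by metis
qed

lemma cl_add: "clinear_fun sc \<omega> \<Longrightarrow> \<omega> (x + y) = \<omega> x + \<omega> y"
  unfolding clinear_fun_def by blast

lemma cl_scal: "clinear_fun sc \<omega> \<Longrightarrow> \<omega> (sc c x) = c * \<omega> x"
  unfolding clinear_fun_def by blast

lemma cl_0: "clinear_fun sc \<omega> \<Longrightarrow> \<omega> 0 = 0"
  using cl_add[of sc \<omega> 0 0] by simp

lemma cl_neg: "clinear_fun sc \<omega> \<Longrightarrow> \<omega> (- x) = - \<omega> x"
proof -
  assume h: "clinear_fun sc \<omega>"
  have "\<omega> x + \<omega> (-x) = 0" using cl_add[OF h, of x "-x"] cl_0[OF h] by simp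
  then show ?thesis by (metis minus_unique)
qed

lemma cl_diff: "clinear_fun sc \<omega> \<Longrightarrow> \<omega> (x - y) = \<omega> x - \<omega> y"
  using cl_add[of sc \<omega> x "-y"] cl_neg[of sc \<omega> y] by simp

lemma cl_sum: "clinear_fun sc \<omega> \<Longrightarrow> \<omega> (sum g A) = sum (\<lambda>x. \<omega> (g x)) A"
  by (induction A rule: infinite_finite_induct) (auto simp: cl_0 cl_add)

lemma ualg_pow: "b ^ n \<in> ualg_gen sc b"
  by (induction n) (auto intro: ualg_gen.intros)

fun altl :: "(bool \<times> 'c) list \<Rightarrow> bool" where
  "altl (x # y # r) = (fst x \<noteq> fst y \<and> altl (y # r))"
| "altl _ = True"

lemma altl_nth: "altl xs \<Longrightarrow> Suc i < length xs \<Longrightarrow> fst (xs!i) \<noteq> fst (xs!(Suc i))"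
proof (induction xs arbitrary: i rule: altl.induct)
  case (1 x y r)
  then show ?case by (cases i) auto
qed auto

lemma altl_par: "altl xs \<Longrightarrow> i < length xs \<Longrightarrow> fst (xs!i) = (if even i then fst (xs!0) else \<not> fst (xs!0))"
proof (induction i)
  case (Suc i)
  then have "fst (xs!i) \<noteq> fst (xs!(Suc i))" using altl_nth by auto
  with Suc show ?case by auto
qed auto

section \<open>Free side\<close>

locale fr =
  fixes sc :: "complex \<Rightarrow> 'c::ring_1 \<Rightarrow> 'c" and \<psi> \<psi>' :: "'c \<Rightarrow> complex" and b1 b2 :: 'c
    and \<mu> \<nu> :: "nat \<Rightarrow> complex"
  assumes ncps: "inf_ncps sc \<psi> \<psi>'"
    and free: "inf_free \<psi> \<psi>' (\<lambda>i::bool. if i then ualg_gen sc b1 else ualg_gen sc b2)"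
    and m1: "\<And>n. \<psi> (b1 ^ n) = \<mu> n" "\<And>n. \<psi>' (b1 ^ n) = 0"
    and m2: "\<And>n. \<psi> (b2 ^ n) = (if n = 0 then 1 else 0)" "\<And>n. \<psi>' (b2 ^ n) = \<nu> n"
begin

abbreviation "SS \<equiv> (\<lambda>i::bool. if i then ualg_gen sc b1 else ualg_gen sc b2)"

lemma calg: "is_calg sc" and lin: "clinear_fun sc \<psi>" and lin': "clinear_fun sc \<psi>'"
  and psi1: "\<psi> 1 = 1" and psi'1: "\<psi>' 1 = 0"
  using ncps unfolding inf_ncps_def by auto

definition cen :: "'c \<Rightarrow> 'c" where "cen x = x - sc (\<psi> x) 1"

lemma psi_cen: "\<psi> (cen x) = 0"
  unfolding cen_def using cl_diff[OF lin] cl_scal[OF lin] psi1 by simp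

lemma cen_mem: "x \<in> ualg_gen sc g \<Longrightarrow> cen x \<in> ualg_gen sc g"
proof -
  assume x: "x \<in> ualg_gen sc g"
  have "cen x = x + sc (- \<psi> x) 1" unfolding cen_def using calg_neg[OF calg] by simp
  then show ?thesis using x by (auto intro: ualg_gen.intros)
qed

lemma split:
  assumes "clinear_fun sc \<omega>"
  shows "\<omega> (P * (x * Q)) = \<omega> (P * (cen x * Q)) + \<psi> x * \<omega> (P * Q)"
proof -
  have "P * (x * Q) = P * (cen x * Q) + P * (sc (\<psi> x) 1 * Q)"
    unfolding cen_def by (simp add: algebra_simps)
  also have "P * (sc (\<psi> x) 1 * Q) = sc (\<psi> x) (P * Q)"
    using calg_mult_left[OF calg] calg_mult_right[OF calg] by simp
  finally show ?thesis using cl_add[OF assms] cl_scal[OF assms] by simp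
qed

lemma AL:
  assumes ne: "xs \<noteq> []" and alt: "altl xs" and mem: "\<forall>p\<in>set xs. snd p \<in> SS (fst p) \<and> \<psi> (snd p) = 0"
  shows "\<psi>' (prod_list (map snd xs)) = (if odd (length xs) then
     (\<Prod>l=1..(length xs - 1) div 2. \<psi> (snd (xs!(l-1)) * snd (xs!(length xs - l)))) *
       \<psi>' (snd (xs!((length xs + 1) div 2 - 1))) else 0)"
proof -
  define n where "n = length xs"
  define ix where "ix = (\<lambda>l. fst (xs!(l-1)))"
  define b where "b = (\<lambda>l. snd (xs!(l-1)))"
  have n1: "n \<ge> 1" using ne n_def by (cases xs) auto
  have c1: "\<forall>l. 1 \<le> l \<and> l < n \<longrightarrow> ix l \<noteq> ix (Suc l)"
  proof (intro allI impI)
    fix l assume "1 \<le> l \<and> l < n"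
    then show "ix l \<noteq> ix (Suc l)" using altl_nth[OF alt, of "l-1"] unfolding ix_def n_def by auto
  qed
  have c2: "\<forall>l\<in>{1..n}. b l \<in> SS (ix l) \<and> \<psi> (b l) = 0"
  proof
    fix l assume "l \<in> {1..n}"
    then have "xs!(l-1) \<in> set xs" unfolding n_def by auto
    then show "b l \<in> SS (ix l) \<and> \<psi> (b l) = 0" using mem unfolding b_def ix_def by blast
  qed
  have mp: "map b [1..<Suc n] = map snd xs"
    by (rule nth_equalityI) (use n1 in \<open>auto simp: n_def b_def nth_upt simp del: upt_Suc\<close>)
  have F: "\<psi>' (prod_list (map b [1..<Suc n])) =
            (if odd n \<and> (\<forall>l \<in> {1..n}. ix l = ix (Suc n - l))
             then (\<Prod>l = 1..(n - 1) div 2. \<psi> (b l * b (Suc n - l))) * \<psi>' (b ((n + 1) div 2))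
             else 0)"
    using free n1 c1 c2 unfolding inf_free_def by blast
  have pal: "odd n \<Longrightarrow> (\<forall>l \<in> {1..n}. ix l = ix (Suc n - l))"
  proof
    fix l assume o: "odd n" and l: "l \<in> {1..n}"
    have "l - 1 < length xs" "n - l < length xs" using l n_def by auto
    then have a1: "fst (xs!(l-1)) = (if even (l-1) then fst (xs!0) else \<not> fst (xs!0))"
      and a2: "fst (xs!(n-l)) = (if even (n-l) then fst (xs!0) else \<not> fst (xs!0))"
      using altl_par[OF alt] by blast+
    have "even (l-1) = even (n-l)" using o l by auto
    then show "ix l = ix (Suc n - l)" using a1 a2 unfolding ix_def by auto
  qed
  have pr: "\<And>l. l \<in> {1..(n - 1) div 2} \<Longrightarrow> \<psi> (b l * b (Suc n - l)) = \<psi> (snd (xs!(l-1)) * snd (xs!(n - l)))"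
    unfolding b_def by auto
  show ?thesis
    using F pal prod.cong[OF refl pr] unfolding mp n_def[symmetric] by (auto simp: b_def)
qed


lemma AL_even:
  assumes "xs \<noteq> []" "altl xs" "\<forall>p\<in>set xs. snd p \<in> SS (fst p) \<and> \<psi> (snd p) = 0" "even (length xs)"
  shows "\<psi>' (prod_list (map snd xs)) = 0"
  using AL[OF assms(1-3)] assms(4) by simp

lemma AL_zero:
  assumes "xs \<noteq> []" "altl xs" "\<forall>p\<in>set xs. snd p \<in> SS (fst p) \<and> \<psi> (snd p) = 0"
    and "1 \<le> l" "l \<le> (length xs - 1) div 2" "\<psi> (snd (xs!(l-1)) * snd (xs!(length xs - l))) = 0"
  shows "\<psi>' (prod_list (map snd xs)) = 0"
proof -
  have "(\<Prod>l=1..(length xs - 1) div 2. \<psi> (snd (xs!(l-1)) * snd (xs!(length xs - l)))) = 0"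
    by (rule prod_zero) (use assms(4-6) in auto)
  then show ?thesis using AL[OF assms(1-3)] by simp
qed

lemma b2_mem: "b2 ^ l \<in> SS False" using ualg_pow by simp
lemma b2_psi: "1 \<le> l \<Longrightarrow> \<psi> (b2 ^ l) = 0" using m2 by simp
lemma b2b2_psi: "1 \<le> l \<Longrightarrow> \<psi> (b2 ^ l * b2 ^ l') = 0"
  using m2 by (simp add: power_add[symmetric])

definition ilist :: "(nat \<times> 'c) list \<Rightarrow> (bool \<times> 'c) list" where
  "ilist zs = concat (map (\<lambda>(l,z). [(False, b2^l), (True, z)]) zs)"

definition blk :: "(nat \<times> 'c) list \<Rightarrow> 'c" where
  "blk bs = prod_list (map (\<lambda>(l,y). b2^l * y) bs)"

lemma blk_simps [simp]: "blk [] = 1" "blk ((l,y) # bs) = b2^l * (y * blk bs)"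
  "blk (xs @ ys) = blk xs * blk ys"
  by (auto simp: blk_def mult.assoc)

lemma ilist_simps [simp]: "ilist [] = []" "ilist ((l,z) # zs) = (False, b2^l) # (True, z) # ilist zs"
  by (auto simp: ilist_def)

lemma length_ilist [simp]: "length (ilist zs) = 2 * length zs"
  by (induction zs) auto

lemma prod_ilist0 [simp]: "prod_list (map snd (ilist zs)) = blk zs"
  by (induction zs) (auto simp: mult.assoc)

lemma ilist_mem:
  assumes "\<forall>(l,z)\<in>set zs. 1 \<le> l \<and> z \<in> ualg_gen sc b1 \<and> \<psi> z = 0"
  shows "\<forall>p\<in>set (ilist zs). snd p \<in> SS (fst p) \<and> \<psi> (snd p) = 0"
  using assms by (induction zs) (fastforce simp: b2_mem b2_psi ualg_pow)+

lemma ilist_alt: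
  "altl ((False,x)#r) \<Longrightarrow> altl (ilist zs @ (False,x)#r) \<and> (\<forall>y. altl ((True,y) # ilist zs @ (False,x)#r))"
  by (induction zs) auto

definition zsok :: "(nat \<times> 'c) list \<Rightarrow> bool" where
  "zsok zs \<longleftrightarrow> (\<forall>(l,z)\<in>set zs. 1 \<le> l \<and> z \<in> ualg_gen sc b1 \<and> \<psi> z = 0)"

definition bsok :: "(nat \<times> 'c) list \<Rightarrow> bool" where
  "bsok bs \<longleftrightarrow> (\<forall>(l,y)\<in>set bs. 1 \<le> l \<and> y \<in> ualg_gen sc b1)"

lemma lemG:
  assumes zs: "zs \<noteq> []" "zsok zs" and l: "1 \<le> l" and x0: "x0 \<in> ualg_gen sc b1" and xm: "xm \<in> ualg_gen sc b1"
  shows "\<psi>' (x0 * (blk zs * (b2^l * xm))) = 0"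
proof -
  obtain l1 z1 zs' where zsd: "zs = (l1,z1) # zs'" using zs by (cases zs) auto
  have l1: "1 \<le> l1" using zs zsd unfolding zsok_def by auto
  have im: "\<forall>p\<in>set (ilist zs). snd p \<in> SS (fst p) \<and> \<psi> (snd p) = 0"
    using ilist_mem zs unfolding zsok_def by blast
  have c0: "cen x0 \<in> SS True" "\<psi> (cen x0) = 0" "cen xm \<in> SS True" "\<psi> (cen xm) = 0"
    using cen_mem x0 xm psi_cen by auto
  have bm: "b2^l \<in> SS False" "\<psi> (b2^l) = 0" using b2_mem b2_psi l by auto
  have alt1: "altl (ilist zs @ [(False, b2^l)])" "altl ((True, cen x0) # ilist zs @ [(False, b2^l)])"
    "altl (ilist zs @ [(False, b2^l), (True, cen xm)])"
    "altl ((True, cen x0) # ilist zs @ [(False, b2^l), (True, cen xm)])"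
    using ilist_alt[of "b2^l" "[]" zs] ilist_alt[of "b2^l" "[(True, cen xm)]" zs] by auto
  have T1: "\<psi>' (cen x0 * (blk zs * (b2^l * cen xm))) = 0"
  proof -
    let ?xs = "(True, cen x0) # ilist zs @ [(False, b2^l), (True, cen xm)]"
    have "\<psi>' (prod_list (map snd ?xs)) = 0"
    proof (rule AL_zero[of _ 2])
      show "\<psi> (snd (?xs!(2-1)) * snd (?xs!(length ?xs - 2))) = 0"
        using b2b2_psi[OF l1] by (simp add: zsd nth_append)
    qed (use alt1 im c0 bm zsd in auto)
    then show ?thesis by simp
  qed
  have T2: "\<psi>' (cen x0 * (blk zs * (b2^l * 1))) = 0"
  proof -
    let ?xs = "(True, cen x0) # ilist zs @ [(False, b2^l)]"
    have "\<psi>' (prod_list (map snd ?xs)) = 0"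
      by (rule AL_even) (use alt1 im c0 bm zsd in auto)
    then show ?thesis by simp
  qed
  have T3: "\<psi>' (1 * (blk zs * (b2^l * cen xm))) = 0"
  proof -
    let ?xs = "ilist zs @ [(False, b2^l), (True, cen xm)]"
    have "\<psi>' (prod_list (map snd ?xs)) = 0"
      by (rule AL_even) (use alt1 im c0 bm zsd in auto)
    then show ?thesis by simp
  qed
  have T4: "\<psi>' (1 * (blk zs * (b2^l * 1))) = 0"
  proof -
    let ?xs = "ilist zs @ [(False, b2^l)]"
    have "\<psi>' (prod_list (map snd ?xs)) = 0"
    proof (rule AL_zero[of _ 1])
      show "\<psi> (snd (?xs!(1-1)) * snd (?xs!(length ?xs - 1))) = 0"
        using b2b2_psi[OF l1] by (simp add: zsd nth_append)
    qed (use alt1 im c0 bm zsd in auto)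
    then show ?thesis by simp
  qed
  have e1: "\<psi>' (1 * (x0 * (blk zs * (b2^l * xm)))) = \<psi>' (1 * (cen x0 * (blk zs * (b2^l * xm)))) + \<psi> x0 * \<psi>' (1 * (blk zs * (b2^l * xm)))"
    by (rule split[OF lin'])
  have e2: "\<psi>' ((cen x0 * (blk zs * b2^l)) * (xm * 1)) = \<psi>' ((cen x0 * (blk zs * b2^l)) * (cen xm * 1)) + \<psi> xm * \<psi>' ((cen x0 * (blk zs * b2^l)) * 1)"
    by (rule split[OF lin'])
  have e3: "\<psi>' ((blk zs * b2^l) * (xm * 1)) = \<psi>' ((blk zs * b2^l) * (cen xm * 1)) + \<psi> xm * \<psi>' ((blk zs * b2^l) * 1)"
    by (rule split[OF lin'])
  show ?thesis using e1 e2 e3 T1 T2 T3 T4 by (simp add: mult.assoc)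
qed


lemma lemH:
  assumes "zs \<noteq> []" "zsok zs" "rest \<noteq> []" "bsok rest" "x0 \<in> ualg_gen sc b1"
  shows "\<psi>' (x0 * (blk zs * blk rest)) = 0"
  using assms
proof (induction "length rest" arbitrary: zs rest rule: less_induct)
  case less
  obtain l y r where rd: "rest = (l,y) # r" using less.prems by (cases rest) auto
  have l: "1 \<le> l" and y: "y \<in> ualg_gen sc b1" using less.prems rd unfolding bsok_def by auto
  show ?case
  proof (cases r)
    case Nil
    then show ?thesis using lemG[OF less.prems(1,2) l less.prems(5) y] rd by simp
  next
    case (Cons p r')
    obtain l' y' where pd: "p = (l',y')" by (cases p)
    have l': "1 \<le> l'" using less.prems rd Cons pd unfolding bsok_def by auto
    have e: "\<psi>' ((x0 * (blk zs * b2^l)) * (y * (b2^l' * (y' * blk r')))) =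
       \<psi>' ((x0 * (blk zs * b2^l)) * (cen y * (b2^l' * (y' * blk r')))) + \<psi> y * \<psi>' ((x0 * (blk zs * b2^l)) * (b2^l' * (y' * blk r')))"
      by (rule split[OF lin'])
    have t1: "\<psi>' (x0 * (blk (zs @ [(l, cen y)]) * blk r)) = 0"
    proof (rule less.hyps)
      show "zsok (zs @ [(l, cen y)])" using less.prems(2) l cen_mem[OF y] psi_cen unfolding zsok_def by auto
      show "bsok r" using less.prems(4) rd unfolding bsok_def by auto
    qed (use rd Cons less.prems in auto)
    have t2: "\<psi>' (x0 * (blk zs * blk ((l + l', y') # r'))) = 0"
    proof (rule less.hyps)
      show "bsok ((l + l', y') # r')" using less.prems(4) rd Cons pd unfolding bsok_def by auto
    qed (use rd Cons less.prems in auto)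
    show ?thesis using e t1 t2 rd Cons pd by (simp add: mult.assoc power_add)
  qed
qed

lemma lemMain:
  assumes "bs \<noteq> []" "bsok bs" "x0 \<in> ualg_gen sc b1"
  shows "\<psi>' (x0 * blk bs) = \<psi> (x0 * snd (last bs)) * prod_list (map (\<lambda>p. \<psi> (snd p)) (butlast bs)) * \<nu> (sum_list (map fst bs))"
  using assms
proof (induction "length bs" arbitrary: bs rule: less_induct)
  case less
  obtain l y r where rd: "bs = (l,y) # r" using less.prems by (cases bs) auto
  have l: "1 \<le> l" and y: "y \<in> ualg_gen sc b1" using less.prems rd unfolding bsok_def by auto
  show ?case
  proof (cases r)
    case Nil
    have c0: "cen x0 \<in> SS True" "\<psi> (cen x0) = 0" "cen y \<in> SS True" "\<psi> (cen y) = 0"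
      using cen_mem less.prems(3) y psi_cen by auto
    have bm: "b2^l \<in> SS False" "\<psi> (b2^l) = 0" using b2_mem b2_psi l by auto
    have T1: "\<psi>' (cen x0 * (b2^l * (cen y * 1))) = \<psi> (cen x0 * cen y) * \<nu> l"
    proof -
      let ?xs = "[(True, cen x0), (False, b2^l), (True, cen y)]"
      have "\<psi>' (prod_list (map snd ?xs)) = \<psi> (cen x0 * cen y) * \<nu> l"
        using AL[of ?xs] c0 bm m2 by simp
      then show ?thesis by simp
    qed
    have T2: "\<psi>' (cen x0 * (b2^l * 1)) = 0"
    proof -
      let ?xs = "[(True, cen x0), (False, b2^l)]"
      have "\<psi>' (prod_list (map snd ?xs)) = 0"
        by (rule AL_even) (use c0 bm in auto)
      then show ?thesis by simp
    qed
    have T3: "\<psi>' (1 * (b2^l * (cen y * 1))) = 0"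
    proof -
      let ?xs = "[(False, b2^l), (True, cen y)]"
      have "\<psi>' (prod_list (map snd ?xs)) = 0"
        by (rule AL_even) (use c0 bm in auto)
      then show ?thesis by simp
    qed
    have e1: "\<psi>' (1 * (x0 * (b2^l * (y * 1)))) = \<psi>' (1 * (cen x0 * (b2^l * (y * 1)))) + \<psi> x0 * \<psi>' (1 * (b2^l * (y * 1)))"
      by (rule split[OF lin'])
    have e2: "\<psi>' ((cen x0 * b2^l) * (y * 1)) = \<psi>' ((cen x0 * b2^l) * (cen y * 1)) + \<psi> y * \<psi>' ((cen x0 * b2^l) * 1)"
      by (rule split[OF lin'])
    have e3: "\<psi>' (b2^l * (y * 1)) = \<psi>' (b2^l * (cen y * 1)) + \<psi> y * \<psi>' (b2^l * 1)"
      by (rule split[OF lin'])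
    have f1: "\<psi> (1 * (x0 * (y * 1))) = \<psi> (1 * (cen x0 * (y * 1))) + \<psi> x0 * \<psi> (1 * (y * 1))"
      by (rule split[OF lin])
    have f2: "\<psi> (cen x0 * (y * 1)) = \<psi> (cen x0 * (cen y * 1)) + \<psi> y * \<psi> (cen x0 * 1)"
      by (rule split[OF lin])
    have "\<psi>' (x0 * (b2^l * y)) = \<psi> (x0 * y) * \<nu> l"
      using e1 e2 e3 f1 f2 T1 T2 T3 c0 m2 by (simp add: mult.assoc algebra_simps)
    then show ?thesis using rd Nil by simp
  next
    case (Cons p r')
    obtain l' y' where pd: "p = (l',y')" by (cases p)
    have e: "\<psi>' ((x0 * b2^l) * (y * (b2^l' * (y' * blk r')))) =
       \<psi>' ((x0 * b2^l) * (cen y * (b2^l' * (y' * blk r')))) + \<psi> y * \<psi>' ((x0 * b2^l) * (b2^l' * (y' * blk r')))"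
      by (rule split[OF lin'])
    have t1: "\<psi>' (x0 * (blk [(l, cen y)] * blk r)) = 0"
    proof (rule lemH)
      show "zsok [(l, cen y)]" using l cen_mem[OF y] psi_cen unfolding zsok_def by auto
      show "bsok r" using less.prems(2) rd unfolding bsok_def by auto
    qed (use rd Cons less.prems in auto)
    have t2: "\<psi>' (x0 * blk ((l + l', y') # r')) = \<psi> (x0 * snd (last ((l + l', y') # r'))) * prod_list (map (\<lambda>p. \<psi> (snd p)) (butlast ((l + l', y') # r'))) * \<nu> (sum_list (map fst ((l + l', y') # r')))"
    proof (rule less.hyps)
      show "bsok ((l + l', y') # r')" using less.prems(2) rd Cons pd unfolding bsok_def by auto
    qed (use rd Cons less.prems in auto)
    have bl: "map (\<lambda>p. \<psi> (snd p)) (butlast ((l + l', y') # r')) = map (\<lambda>p. \<psi> (snd p)) (butlast ((l', y') # r'))"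
      by (cases r') auto
    have q1: "x0 * blk bs = (x0 * b2^l) * (y * (b2^l' * (y' * blk r')))" using rd Cons pd by (simp add: mult.assoc)
    have q2: "x0 * (blk [(l, cen y)] * blk r) = (x0 * b2^l) * (cen y * (b2^l' * (y' * blk r')))" using rd Cons pd by (simp add: mult.assoc)
    have q3: "x0 * blk ((l + l', y') # r') = (x0 * b2^l) * (b2^l' * (y' * blk r'))" by (simp add: mult.assoc power_add)
    have "\<psi>' (x0 * blk bs) = \<psi> y * \<psi>' (x0 * blk ((l + l', y') # r'))"
      using e t1 q1 q2 q3 by simp
    also have "\<dots> = \<psi> y * (\<psi> (x0 * snd (last ((l + l', y') # r'))) * prod_list (map (\<lambda>p. \<psi> (snd p)) (butlast ((l', y') # r'))) * \<nu> (sum_list (map fst ((l + l', y') # r'))))"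
      using t2 bl by simp
    also have "\<dots> = \<psi> (x0 * snd (last bs)) * prod_list (map (\<lambda>p. \<psi> (snd p)) (butlast bs)) * \<nu> (sum_list (map fst bs))"
      using rd Cons pd by (simp add: algebra_simps)
    finally show ?thesis .
  qed
qed

end

section \<open>Words\<close>

definition Sw :: "nat \<Rightarrow> nat list set" where
  "Sw n = {ks. 2 \<le> length ks \<and> sum_list ks + length ks = Suc n}"

definition inclast :: "nat list \<Rightarrow> nat list" where
  "inclast ks = butlast ks @ [Suc (last ks)]"

definition snoc0 :: "nat list \<Rightarrow> nat list" where
  "snoc0 ks = ks @ [0]"

lemma Sw_finite: "finite (Sw n)"
proof -
  have "Sw n \<subseteq> {ks. set ks \<subseteq> {..n} \<and> length ks \<le> Suc n}"
  proof
    fix ks assume "ks \<in> Sw n"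
    then have h: "sum_list ks + length ks = Suc n" unfolding Sw_def by auto
    have "\<forall>x\<in>set ks. x \<le> n"
    proof
      fix x assume "x \<in> set ks"
      then have "x \<le> sum_list ks" by (simp add: member_le_sum_list)
      moreover have "length ks \<ge> 1" using \<open>x \<in> set ks\<close> by (cases ks) auto
      ultimately show "x \<le> n" using h by linarith
    qed
    then show "ks \<in> {ks. set ks \<subseteq> {..n} \<and> length ks \<le> Suc n}" using h by auto
  qed
  moreover have "finite {ks. set ks \<subseteq> {..n} \<and> length ks \<le> Suc n}"
    by (rule finite_lists_length_le) auto
  ultimately show ?thesis by (rule finite_subset)
qed

lemma Sw_0: "Sw 0 = {}" unfolding Sw_def by auto

lemma inclast_props: "ks \<noteq> [] \<Longrightarrow> length (inclast ks) = length ks \<and> sum_list (inclast ks) = Suc (sum_list ks) \<and> last (inclast ks) = Suc (last ks) \<and> butlast (inclast ks) = butlast ks"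
proof -
  assume "ks \<noteq> []"
  then have e: "ks = butlast ks @ [last ks]" by simp
  have "sum_list ks = sum_list (butlast ks) + last ks" by (subst e) simp
  then show ?thesis unfolding inclast_def using \<open>ks \<noteq> []\<close> by simp
qed

lemma Sw_Suc: "Sw (Suc n) = inclast ` Sw n \<union> snoc0 ` Sw n \<union> {[n,0]}"
proof (intro equalityI subsetI)
  fix ks assume ks: "ks \<in> Sw (Suc n)"
  then have l2: "2 \<le> length ks" and s: "sum_list ks + length ks = Suc (Suc n)" unfolding Sw_def by auto
  have ne: "ks \<noteq> []" using l2 by auto
  have e: "ks = butlast ks @ [last ks]" using ne by simp
  have sb: "sum_list ks = sum_list (butlast ks) + last ks" by (subst e) simp
  show "ks \<in> inclast ` Sw n \<union> snoc0 ` Sw n \<union> {[n,0]}"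
  proof (cases "last ks")
    case 0
    show ?thesis
    proof (cases "length ks = 2")
      case True
      then obtain x y where "ks = [x,y]" by (metis (no_types) One_nat_def Suc_1 length_0_conv length_Suc_conv)
      then show ?thesis using 0 s by auto
    next
      case False
      have "butlast ks \<in> Sw n" using l2 False s sb 0 unfolding Sw_def by auto
      moreover have "ks = snoc0 (butlast ks)" using e 0 unfolding snoc0_def by simp
      ultimately show ?thesis by blast
    qed
  next
    case (Suc k)
    define ks' where "ks' = butlast ks @ [k]"
    have "ks' \<in> Sw n" using l2 s sb Suc unfolding Sw_def ks'_def by auto
    moreover have "ks = inclast ks'" using e Suc unfolding inclast_def ks'_def by simp
    ultimately show ?thesis by blast
  qed
next
  fix ks assume "ks \<in> inclast ` Sw n \<union> snoc0 ` Sw n \<union> {[n,0]}"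
  then show "ks \<in> Sw (Suc n)"
  proof (elim UnE imageE)
    fix x assume h: "ks = inclast x" "x \<in> Sw n"
    then have "x \<noteq> []" unfolding Sw_def by auto
    then show ?thesis using h inclast_props[of x] unfolding Sw_def by auto
  next
    fix x assume "ks = snoc0 x" "x \<in> Sw n"
    then show ?thesis unfolding Sw_def snoc0_def by auto
  qed (auto simp: Sw_def)
qed

lemma expand_words:
  fixes e :: "nat \<Rightarrow> 'x::ab_group_add" and W :: "nat list \<Rightarrow> 'x"
  assumes e0: "e 0 = 0"
    and eS: "\<And>n. e (Suc n) = W [n,0] + P (e n) + Q (e n)"
    and Wi: "\<And>ks. 2 \<le> length ks \<Longrightarrow> W (inclast ks) = P (W ks)"
    and Ws: "\<And>ks. 2 \<le> length ks \<Longrightarrow> W (snoc0 ks) = Q (W ks)"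
    and P: "\<And>x y. P (x + y) = P x + P y" and Q: "\<And>x y. Q (x + y) = Q x + Q y"
  shows "e n = sum W (Sw n)"
proof (induction n)
  case 0
  then show ?case using e0 Sw_0 by simp
next
  case (Suc n)
  have P0: "P 0 = 0" using P[of 0 0] by simp
  have Q0: "Q 0 = 0" using Q[of 0 0] by simp
  have Ps: "\<And>A g. P (sum g A) = sum (\<lambda>x. P (g x)) A"
    by (induct_tac A rule: infinite_finite_induct) (auto simp: P0 P)
  have Qs: "\<And>A g. Q (sum g A) = sum (\<lambda>x. Q (g x)) A"
    by (induct_tac A rule: infinite_finite_induct) (auto simp: Q0 Q)
  have inj1: "inj_on inclast (Sw n)"
  proof (rule inj_onI)
    fix x y assume xy: "x \<in> Sw n" "y \<in> Sw n" "inclast x = inclast y"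
    then have ne: "x \<noteq> []" "y \<noteq> []" unfolding Sw_def by auto
    then have "butlast x = butlast y" "last x = last y" using xy(3) inclast_props[of x] inclast_props[of y] by auto
    then show "x = y" using ne by (metis append_butlast_last_id)
  qed
  have inj2: "inj_on snoc0 (Sw n)" unfolding snoc0_def by (auto intro: inj_onI)
  have d1: "inclast ` Sw n \<inter> snoc0 ` Sw n = {}"
  proof -
    have "\<And>x y. x \<in> Sw n \<Longrightarrow> inclast x \<noteq> snoc0 y"
    proof
      fix x y assume "x \<in> Sw n" "inclast x = snoc0 y"
      then have "last (inclast x) = 0" "x \<noteq> []" unfolding snoc0_def Sw_def by auto
      then show False using inclast_props[of x] by simp
    qed
    then show ?thesis by blast
  qed
  have d2: "(inclast ` Sw n \<union> snoc0 ` Sw n) \<inter> {[n,0]} = {}"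
  proof -
    have "\<And>x. x \<in> Sw n \<Longrightarrow> inclast x \<noteq> [n,0]"
    proof
      fix x assume "x \<in> Sw n" "inclast x = [n,0]"
      then have "last (inclast x) = 0" "x \<noteq> []" unfolding Sw_def by auto
      then show False using inclast_props[of x] by simp
    qed
    moreover have "\<And>x. x \<in> Sw n \<Longrightarrow> snoc0 x \<noteq> [n,0]"
      unfolding Sw_def snoc0_def by auto
    ultimately show ?thesis by blast
  qed
  have "sum W (Sw (Suc n)) = sum W (inclast ` Sw n) + sum W (snoc0 ` Sw n) + W [n,0]"
    unfolding Sw_Suc using d1 d2 Sw_finite[of n]
    by (simp add: sum.union_disjoint)
  also have "sum W (inclast ` Sw n) = sum (\<lambda>ks. P (W ks)) (Sw n)"
    by (subst sum.reindex[OF inj1]) (auto intro!: sum.cong Wi simp: Sw_def)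
  also have "sum W (snoc0 ` Sw n) = sum (\<lambda>ks. Q (W ks)) (Sw n)"
    by (subst sum.reindex[OF inj2]) (auto intro!: sum.cong Ws simp: Sw_def)
  finally show ?case using Suc eS Ps[of W "Sw n"] Qs[of W "Sw n"] by (simp add: algebra_simps)
qed


definition val :: "(nat \<Rightarrow> complex) \<Rightarrow> (nat \<Rightarrow> complex) \<Rightarrow> nat list \<Rightarrow> complex" where
  "val \<mu> \<nu> ks = \<mu> (hd ks + last ks) * prod_list (map \<mu> (butlast (tl ks))) * \<nu> (length ks - 1)"

lemma len2_cases: "2 \<le> length ks \<Longrightarrow> \<exists>k0 rest. ks = k0 # rest \<and> rest \<noteq> []"
  by (cases ks) auto

lemma inclast_Cons: "rest \<noteq> [] \<Longrightarrow> inclast (k0 # rest) = k0 # inclast rest"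
  unfolding inclast_def by simp

context fr
begin

definition Wb :: "nat list \<Rightarrow> 'c" where
  "Wb ks = b1 ^ (hd ks) * blk (map (\<lambda>k. (1, b1^k)) (tl ks))"

lemma Wb_val:
  assumes "2 \<le> length ks"
  shows "\<psi>' (Wb ks) = val \<mu> \<nu> ks"
proof -
  obtain k0 rest where ks: "ks = k0 # rest" "rest \<noteq> []" using len2_cases[OF assms] by blast
  define bs where "bs = map (\<lambda>k. (1::nat, b1^k)) rest"
  have "bs \<noteq> []" "bsok bs" using ks unfolding bs_def bsok_def by (auto simp: ualg_pow)
  from lemMain[OF this ualg_pow]
  have "\<psi>' (b1^k0 * blk bs) = \<psi> (b1^k0 * snd (last bs)) * prod_list (map (\<lambda>p. \<psi> (snd p)) (butlast bs)) * \<nu> (sum_list (map fst bs))" .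
  moreover have "snd (last bs) = b1 ^ last rest" unfolding bs_def using ks by (simp add: last_map)
  moreover have "map (\<lambda>p. \<psi> (snd p)) (butlast bs) = map \<mu> (butlast rest)"
    unfolding bs_def by (simp add: map_butlast[symmetric] m1)
  moreover have "sum_list (map fst bs) = length rest" unfolding bs_def by (induction rest) auto
  ultimately show ?thesis using ks unfolding Wb_def val_def bs_def by (simp add: power_add[symmetric] m1)
qed

lemma free_expand: "(b1 + b2)^n - b1^n = sum Wb (Sw n)"
proof (rule expand_words[where P = "\<lambda>x. x * b1" and Q = "\<lambda>x. x * b2"])
  fix n
  show "(b1 + b2) ^ Suc n - b1 ^ Suc n = Wb [n, 0] + ((b1 + b2) ^ n - b1 ^ n) * b1 + ((b1 + b2) ^ n - b1 ^ n) * b2"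
    unfolding Wb_def power_Suc2 by (simp add: algebra_simps del: power_Suc)
next
  fix ks :: "nat list" assume "2 \<le> length ks"
  then obtain k0 rest where ks: "ks = k0 # rest" "rest \<noteq> []" using len2_cases by blast
  then obtain rs l where r: "rest = rs @ [l]" by (metis append_butlast_last_id)
  have "Wb ks = b1^k0 * blk (map (\<lambda>k. (1, b1^k)) rs) * (b2 * b1 ^ l)"
    unfolding Wb_def using ks r by (simp add: mult.assoc)
  moreover have "Wb (inclast ks) = b1^k0 * blk (map (\<lambda>k. (1, b1^k)) rs) * (b2 * b1 ^ Suc l)"
    unfolding Wb_def using ks r by (simp add: inclast_Cons inclast_def mult.assoc)
  moreover have "b1 * b1 ^ l = b1 ^ l * b1" by (simp add: power_commutes)
  ultimately show "Wb (inclast ks) = Wb ks * b1" by (simp add: mult.assoc)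
  show "Wb (snoc0 ks) = Wb ks * b2"
    unfolding Wb_def snoc0_def using ks by (simp add: mult.assoc)
qed (auto simp: algebra_simps)

lemma free_moments: "\<psi>' ((b1 + b2)^n) = sum (val \<mu> \<nu>) (Sw n)"
proof -
  have "\<psi>' ((b1 + b2)^n) = \<psi>' (((b1 + b2)^n - b1^n) + b1^n)" by simp
  also have "\<dots> = \<psi>' (sum Wb (Sw n))" using cl_add[OF lin'] m1 free_expand by simp
  also have "\<dots> = sum (\<lambda>ks. \<psi>' (Wb ks)) (Sw n)" using cl_sum[OF lin', of Wb "Sw n"] by simp
  also have "\<dots> = sum (val \<mu> \<nu>) (Sw n)" by (rule sum.cong) (auto simp: Wb_val Sw_def)
  finally show ?thesis .
qed

end


section \<open>Antimonotone side\<close>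

lemma prod_list_nth: "prod_list (map g xs) = (\<Prod>i<length xs. g (xs!i))"
  by (induction xs) (simp_all add: prod.lessThan_Suc_shift del: prod.lessThan_Suc)

lemma alt_word_cong:
  "(\<And>i. i \<le> m \<Longrightarrow> A i = A' i) \<Longrightarrow> alt_word lm rm A F m = alt_word lm rm A' F m"
proof (induction m rule: less_induct)
  case (less m)
  show ?case
  proof (cases m)
    case 0 then show ?thesis by simp
  next
    case (Suc k)
    show ?thesis
    proof (cases k)
      case 0 then show ?thesis using less.prems Suc by simp
    next
      case (Suc j)
      have "alt_word lm rm A F (Suc j) = alt_word lm rm A' F (Suc j)"
        using less \<open>m = Suc k\<close> Suc by auto
      then show ?thesis using less.prems \<open>m = Suc k\<close> Suc by simp
    qed
  qed
qed

locale bs =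
  fixes sa :: "complex \<Rightarrow> 'a::ring_1 \<Rightarrow> 'a" and \<phi> :: "'a \<Rightarrow> complex"
    and sf :: "complex \<Rightarrow> 'f::ring \<Rightarrow> 'f" and lm :: "'a \<Rightarrow> 'f \<Rightarrow> 'f"
    and rm :: "'f \<Rightarrow> 'a \<Rightarrow> 'f" and \<Phi> :: "'f \<Rightarrow> complex"
    and a :: 'a and f :: 'f
  assumes nc: "ncps_typeB' sa \<phi> sf lm rm \<Phi>"
    and ind: "cyc_antimono_indep lm rm \<phi> \<Phi> (ualg_gen sa a) (alg_gen sf f)"
begin

lemma bim: "is_compat_bimodule sa sf lm rm" and linP: "clinear_fun sf \<Phi>" and linp: "clinear_fun sa \<phi>"
  and phi1: "\<phi> 1 = 1"
  using nc unfolding ncps_typeB'_def by auto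

lemma lm_mult: "lm (x * y) z = lm x (lm y z)"
  using bim by (simp add: is_compat_bimodule_def)
lemma lm_1: "lm 1 z = z"
  using bim by (simp add: is_compat_bimodule_def)
lemma lm_addl: "lm (x + y) z = lm x z + lm y z"
  using bim by (simp add: is_compat_bimodule_def)
lemma lm_addr: "lm x (z + w) = lm x z + lm x w"
  using bim by (simp add: is_compat_bimodule_def)
lemma rm_mult: "rm z (x * y) = rm (rm z x) y"
  using bim by (simp add: is_compat_bimodule_def)
lemma rm_1: "rm z 1 = z"
  using bim by (simp add: is_compat_bimodule_def)
lemma rm_addr: "rm z (x + y) = rm z x + rm z y"
  using bim by (simp add: is_compat_bimodule_def)
lemma rm_addl: "rm (z + w) x = rm z x + rm w x"
  using bim by (simp add: is_compat_bimodule_def)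

lemma lm_0: "lm 0 z = 0" using lm_addl[of 0 0 z] by simp
lemma rm_0: "rm z 0 = 0" using rm_addr[of z 0 0] by simp
lemma rm_0l: "rm 0 x = 0" using rm_addl[of 0 0 x] by simp

lemma fst_bpow: "fst (bpow lm rm x n) = fst x ^ n"
  by (induction n) (auto simp: bmul_def power_commutes)

lemma bpow_Suc_snd: "snd (bpow lm rm x (Suc n)) = lm (fst x ^ n) (snd x) + rm (snd (bpow lm rm x n)) (fst x) + snd (bpow lm rm x n) * snd x"
  by (simp add: bmul_def fst_bpow)

lemma nu_fprod: "snd (bpow lm rm (0, f) (Suc n)) = fprod (\<lambda>_. f) (Suc n)"
proof (induction n)
  case 0
  then show ?case by (simp add: bmul_def lm_1 rm_0)
next
  case (Suc n)
  then show ?case using bpow_Suc_snd[of "(0,f)" "Suc n"] by (simp add: lm_0 rm_0)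
qed

definition Wa :: "nat list \<Rightarrow> 'f" where
  "Wa ks = alt_word lm rm (\<lambda>i. a ^ (ks!i)) (\<lambda>_. f) (length ks - 1)"

lemma alt_word_last:
  assumes "1 \<le> m"
  shows "alt_word lm rm (\<lambda>i. if i = m then A m * c else A i) F m = rm (alt_word lm rm A F m) c"
proof -
  obtain k where m: "m = Suc k" using assms by (cases m) auto
  show ?thesis
  proof (cases k)
    case 0 then show ?thesis using m by (simp add: rm_mult)
  next
    case (Suc j)
    have "alt_word lm rm (\<lambda>i. if i = m then A m * c else A i) F (Suc j) = alt_word lm rm A F (Suc j)"
      by (rule alt_word_cong) (use m Suc in auto)
    then show ?thesis using m Suc by (simp add: rm_mult)
  qed
qed

lemma Wa_inclast: "2 \<le> length ks \<Longrightarrow> Wa (inclast ks) = rm (Wa ks) a"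
proof -
  assume l: "2 \<le> length ks"
  define m where "m = length ks - 1"
  have m1: "1 \<le> m" using l m_def by auto
  have ne0: "ks \<noteq> []" using l by auto
  have li: "length (inclast ks) = length ks" using inclast_props[OF ne0] by simp
  have "Wa (inclast ks) = alt_word lm rm (\<lambda>i. if i = m then a ^ (ks!m) * a else a ^ (ks!i)) (\<lambda>_. f) m"
    unfolding Wa_def li m_def[symmetric]
  proof (rule alt_word_cong)
    fix i assume i: "i \<le> m"
    have ne: "ks \<noteq> []" using l by auto
    show "a ^ (inclast ks ! i) = (if i = m then a ^ (ks ! m) * a else a ^ (ks ! i))"
    proof (cases "i = m")
      case True
      then show ?thesis using ne m_def by (simp add: inclast_def nth_append last_conv_nth power_commutes)
    next
      case False
      then have "i < length (butlast ks)" using i m_def by simp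
      then show ?thesis using False by (simp add: inclast_def nth_append nth_butlast)
    qed
  qed
  also have "\<dots> = rm (Wa ks) a"
    using alt_word_last[OF m1, of "\<lambda>i. a ^ (ks!i)" a "\<lambda>_. f"] unfolding Wa_def m_def by simp
  finally show ?thesis .
qed

lemma Wa_snoc0: "2 \<le> length ks \<Longrightarrow> Wa (snoc0 ks) = Wa ks * f"
proof -
  assume l: "2 \<le> length ks"
  define j where "j = length ks - 2"
  have j: "length ks - 1 = Suc j" using l j_def by simp
  have "alt_word lm rm (\<lambda>i. a ^ ((ks @ [0]) ! i)) (\<lambda>_. f) (Suc j) = alt_word lm rm (\<lambda>i. a ^ (ks ! i)) (\<lambda>_. f) (Suc j)"
    by (rule alt_word_cong) (use j in \<open>auto simp: nth_append\<close>)
  moreover have "length (ks @ [0]) - 1 = Suc (Suc j)" using j by simp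
  moreover have "(ks @ [0]) ! Suc (Suc j) = 0" using j by (simp add: nth_append)
  ultimately show ?thesis unfolding Wa_def snoc0_def using j by (simp add: rm_1)
qed

lemma E_expand: "snd (bpow lm rm (a, f) n) = sum Wa (Sw n)"
proof (rule expand_words[where P = "\<lambda>x. rm x a" and Q = "\<lambda>x. x * f"])
  fix n
  show "snd (bpow lm rm (a, f) (Suc n)) = Wa [n, 0] + rm (snd (bpow lm rm (a, f) n)) a + snd (bpow lm rm (a, f) n) * f"
    using bpow_Suc_snd[of "(a,f)" n] by (simp add: Wa_def rm_1)
qed (auto simp: Wa_inclast Wa_snoc0 rm_addl algebra_simps)


definition "\<mu>B n = \<phi> (a ^ n)"
definition "\<nu>B n = \<Phi> (snd (bpow lm rm (0, f) n))"

lemma Wa_val: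
  assumes l: "2 \<le> length ks"
  shows "\<Phi> (Wa ks) = val \<mu>B \<nu>B ks"
proof -
  define m where "m = length ks - 1"
  have m1: "1 \<le> m" using l m_def by auto
  have "\<forall>l \<le> m. a ^ (ks!l) \<in> ualg_gen sa a" by (auto simp: ualg_pow)
  moreover have "\<forall>l \<in> {1..m}. f \<in> alg_gen sf f" by (auto intro: alg_gen.gen)
  ultimately have F: "\<Phi> (alt_word lm rm (\<lambda>i. a ^ (ks!i)) (\<lambda>_. f) m) =
      \<phi> (a ^ (ks!0) * a ^ (ks!m)) * (\<Prod>i = 1..m-1. \<phi> (a ^ (ks!i))) * \<Phi> (fprod (\<lambda>_. f) m)"
    using ind[unfolded cyc_antimono_indep_def, rule_format, of m "\<lambda>i. a ^ (ks!i)" "\<lambda>_. f"] m1 by blast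
  have ne: "ks \<noteq> []" using l by auto
  have e1: "\<phi> (a ^ (ks!0) * a ^ (ks!m)) = \<mu>B (hd ks + last ks)"
    unfolding \<mu>B_def using ne m_def by (simp add: power_add hd_conv_nth last_conv_nth)
  have e2: "(\<Prod>i = 1..m-1. \<phi> (a ^ (ks!i))) = prod_list (map \<mu>B (butlast (tl ks)))"
  proof -
    have "(\<Prod>i = 1..m-1. \<phi> (a ^ (ks!i))) = (\<Prod>k<m-1. \<phi> (a ^ (ks!(Suc k))))"
      using prod.atLeast1_atMost_eq[of "\<lambda>i. \<phi> (a ^ (ks!i))" "m-1"] by simp
    also have "\<dots> = (\<Prod>k<length (butlast (tl ks)). \<mu>B (butlast (tl ks) ! k))"
      by (rule prod.cong) (use m_def in \<open>auto simp: \<mu>B_def nth_butlast nth_tl\<close>)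
    finally show ?thesis by (simp add: prod_list_nth)
  qed
  have e3: "\<Phi> (fprod (\<lambda>_. f) m) = \<nu>B m"
    unfolding \<nu>B_def using nu_fprod[of "m-1"] m1 by simp
  show ?thesis using F e1 e2 e3 unfolding Wa_def val_def m_def by simp
qed

lemma B_moments: "\<Phi> (snd (bpow lm rm (a, f) n)) = sum (val \<mu>B \<nu>B) (Sw n)"
proof -
  have "\<Phi> (snd (bpow lm rm (a, f) n)) = sum (\<lambda>ks. \<Phi> (Wa ks)) (Sw n)"
    using E_expand cl_sum[OF linP, of Wa "Sw n"] by simp
  also have "\<dots> = sum (val \<mu>B \<nu>B) (Sw n)" by (rule sum.cong) (auto simp: Wa_val Sw_def)
  finally show ?thesis .
qed

end


section \<open>Generating functions\<close>

lemma sum_Sigma':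
  "finite A \<Longrightarrow> (\<forall>a\<in>A. finite (B a)) \<Longrightarrow> sum G (Sigma A B) = (\<Sum>a\<in>A. \<Sum>b\<in>B a. G (a,b))"
  using sum.Sigma[of A B "\<lambda>a b. G (a,b)"] by simp

lemma Mpow_nth:
  fixes \<mu> :: "nat \<Rightarrow> complex"
  shows "(Abs_fps \<mu> ^ p) $ r = (\<Sum>v\<in>natpermute r p. prod_list (map \<mu> v))"
proof (cases "p = 0")
  case True
  then show ?thesis by (simp add: natpermute_0)
next
  case False
  have "(Abs_fps \<mu> ^ p) $ r = (\<Sum>v\<in>natpermute r p. \<Prod>j\<in>{0..p - 1}. Abs_fps \<mu> $ (v!j))"
    using fps_power_nth[of "Abs_fps \<mu>" p r] False by simp
  also have "\<dots> = (\<Sum>v\<in>natpermute r p. prod_list (map \<mu> v))"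
  proof (rule sum.cong[OF refl])
    fix v assume "v \<in> natpermute r p"
    then have lv: "length v = p" by (simp add: natpermute_def)
    have "{0..p-1} = {..<p}" using False by auto
    then show "(\<Prod>j\<in>{0..p - 1}. Abs_fps \<mu> $ (v!j)) = prod_list (map \<mu> v)"
      by (simp add: prod_list_nth lv)
  qed
  finally show ?thesis .
qed

lemma comb_main:
  "sum (val \<mu> \<nu>) (Sw n) = (fps_X * fps_deriv (fps_X * Abs_fps \<mu>) * (Abs_fps (\<lambda>m. \<nu> (Suc m)) oo (fps_X * Abs_fps \<mu>))) $ n"
proof (cases n)
  case 0
  then show ?thesis by (simp add: Sw_0)
next
  case (Suc n')
  define M where "M = Abs_fps \<mu>"
  define G where "G = fps_X * M"
  define N1 where "N1 = Abs_fps (\<lambda>m. \<nu> (Suc m))"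
  define T where "T = Sigma {0..n'} (\<lambda>i. Sigma {0..n'-i} (\<lambda>p. Sigma {0..i} (\<lambda>k0. natpermute (n'-i-p) p)))"
  define h :: "nat \<times> nat \<times> nat \<times> nat list \<Rightarrow> nat list" where "h = (\<lambda>(i,p,k0,v). k0 # v @ [i - k0])"
  define g :: "nat \<times> nat \<times> nat \<times> nat list \<Rightarrow> complex" where "g = (\<lambda>(i,p,k0,v). \<mu> i * prod_list (map \<mu> v) * \<nu> (Suc p))"
  have bij: "bij_betw h T (Sw n)"
  proof (rule bij_betwI')
    fix x y assume "x \<in> T" "y \<in> T"
    then show "(h x = h y) = (x = y)"
      unfolding T_def h_def natpermute_def by (cases x; cases y) auto
  next
    fix x assume "x \<in> T"
    then show "h x \<in> Sw n"
      unfolding T_def h_def natpermute_def Sw_def Suc by (cases x) auto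
  next
    fix ks assume ks: "ks \<in> Sw n"
    then obtain k0 rest where kr: "ks = k0 # rest" "rest \<noteq> []" using len2_cases unfolding Sw_def by blast
    then obtain v km where vk: "rest = v @ [km]" by (metis append_butlast_last_id)
    have s: "k0 + sum_list v + km + length v = n'" using ks kr vk Suc unfolding Sw_def by simp
    show "\<exists>x\<in>T. ks = h x"
    proof (rule bexI[of _ "(k0 + km, length v, k0, v)"])
      show "ks = h (k0 + km, length v, k0, v)" unfolding h_def using kr vk by simp
      show "(k0 + km, length v, k0, v) \<in> T" unfolding T_def natpermute_def using s by auto
    qed
  qed
  have fin: "finite T" unfolding T_def by (auto intro!: finite_SigmaI natpermute_finite)
  have "sum (val \<mu> \<nu>) (Sw n) = sum (\<lambda>x. val \<mu> \<nu> (h x)) T"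
    using sum.reindex_bij_betw[OF bij, of "val \<mu> \<nu>"] by simp
  also have "\<dots> = sum g T"
  proof (rule sum.cong[OF refl])
    fix x assume "x \<in> T"
    then show "val \<mu> \<nu> (h x) = g x"
      unfolding T_def h_def g_def val_def natpermute_def by (cases x) auto
  qed
  also have "\<dots> = (\<Sum>i=0..n'. \<Sum>p=0..n'-i. \<Sum>k0=0..i. \<Sum>v\<in>natpermute (n'-i-p) p. g (i,p,k0,v))"
    unfolding T_def by (simp add: sum_Sigma' natpermute_finite finite_SigmaI)
  also have "\<dots> = (\<Sum>i=0..n'. \<Sum>p=0..n'-i. of_nat (Suc i) * (\<mu> i * \<nu> (Suc p) * (\<Sum>v\<in>natpermute (n'-i-p) p. prod_list (map \<mu> v))))"
    by (simp add: g_def sum_distrib_left sum_distrib_right mult_ac)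
  also have "\<dots> = (\<Sum>i=0..n'. fps_deriv G $ i * (N1 oo G) $ (n' - i))"
  proof (rule sum.cong[OF refl])
    fix i assume i: "i \<in> {0..n'}"
    have "(N1 oo G) $ (n' - i) = (\<Sum>p=0..n'-i. \<nu> (Suc p) * (G ^ p) $ (n' - i))"
      unfolding N1_def by (simp add: fps_compose_nth)
    also have "\<dots> = (\<Sum>p=0..n'-i. \<nu> (Suc p) * (\<Sum>v\<in>natpermute (n'-i-p) p. prod_list (map \<mu> v)))"
    proof (rule sum.cong[OF refl])
      fix p assume p: "p \<in> {0..n'-i}"
      have "(G ^ p) $ (n' - i) = (fps_X ^ p * M ^ p) $ (n' - i)" unfolding G_def by (simp add: power_mult_distrib)
      also have "\<dots> = (M ^ p) $ (n' - i - p)" using p by (simp add: fps_X_power_mult_nth)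
      finally show "\<nu> (Suc p) * (G ^ p) $ (n' - i) = \<nu> (Suc p) * (\<Sum>v\<in>natpermute (n'-i-p) p. prod_list (map \<mu> v))"
        unfolding M_def by (simp add: Mpow_nth)
    qed
    finally have nG: "(N1 oo G) $ (n' - i) = \<dots>" .
    have dG: "fps_deriv G $ i = of_nat (Suc i) * \<mu> i" unfolding G_def M_def by (simp add: fps_X_mult_nth algebra_simps)
    show "(\<Sum>p=0..n'-i. of_nat (Suc i) * (\<mu> i * \<nu> (Suc p) * (\<Sum>v\<in>natpermute (n'-i-p) p. prod_list (map \<mu> v)))) = fps_deriv G $ i * (N1 oo G) $ (n' - i)"
      unfolding dG nG by (simp add: sum_distrib_left mult_ac)
  qed
  also have "\<dots> = (fps_deriv G * (N1 oo G)) $ n'"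
    by (simp only: fps_mult_nth)
  also have "\<dots> = (fps_X * fps_deriv G * (N1 oo G)) $ n"
    using Suc by (simp only: mult.assoc fps_X_mult_nth) simp
  finally show ?thesis unfolding G_def M_def N1_def .
qed


lemma fls_deriv_inv:
  fixes g :: "complex fls"
  assumes "g \<noteq> 0"
  shows "fls_deriv (inverse g) = - fls_deriv g / g ^ 2"
proof -
  have "fls_deriv (inverse g * g) = 0" using assms by simp
  then have "fls_deriv (inverse g) * g + inverse g * fls_deriv g = 0" by (simp add: add.commute)
  then have "fls_deriv (inverse g) * g * g = - fls_deriv g"
    using assms by (simp add: field_simps power2_eq_square add_eq_0_iff2)
  then show ?thesis using assms by (simp add: field_simps power2_eq_square)
qed

lemma fls_part:
  fixes \<mu> \<nu> \<nu>t :: "nat \<Rightarrow> complex"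
  assumes mu0: "\<mu> 0 = 1" and nu0: "\<nu> 0 = 0"
    and nt: "Abs_fps \<nu>t = fps_X * fps_deriv (fps_X * Abs_fps \<mu>) * (Abs_fps (\<lambda>m. \<nu> (Suc m)) oo (fps_X * Abs_fps \<mu>))"
  shows "Gser \<nu>t = subst_z (Gser \<nu>) (Fser \<mu>) * zderiv (Fser \<mu>)"
proof -
  define G where "G = fps_X * Abs_fps \<mu>"
  define N1 where "N1 = Abs_fps (\<lambda>m. \<nu> (Suc m))"
  define H where "H = N1 oo G"
  have G1: "G $ 1 = 1" unfolding G_def using mu0 by (simp add: fps_X_mult_nth)
  have Gnz: "G \<noteq> 0" using G1 by auto
  have G0: "G $ 0 = 0" unfolding G_def by simp
  have fGnz: "fps_to_fls G \<noteq> 0" using Gnz by simp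
  have nu: "Abs_fps \<nu> = fps_X * N1"
    unfolding N1_def by (rule fps_ext) (auto simp: fps_X_mult_nth nu0)
  have Fs: "Fser \<mu> = inverse (fps_to_fls G)" unfolding Fser_def Gser_def G_def by simp
  have "subst_z (Gser \<nu>) (Fser \<mu>) = fls_compose_fps (fps_to_fls (fps_X * (fps_X * N1))) G"
    unfolding subst_z_def Gser_def Fs nu by simp
  also have "\<dots> = fps_to_fls ((fps_X * (fps_X * N1)) oo G)"
    using Gnz G0 by simp
  also have "(fps_X * (fps_X * N1)) oo G = G * (G * H)"
    using G0 unfolding H_def by (simp add: fps_compose_mult_distrib)
  finally have S: "subst_z (Gser \<nu>) (Fser \<mu>) = fps_to_fls G * fps_to_fls G * fps_to_fls H"
    by (simp add: fls_times_fps_to_fls mult.assoc)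
  have Z: "zderiv (Fser \<mu>) = fls_X ^ 2 * fps_to_fls (fps_deriv G) / (fps_to_fls G) ^ 2"
    unfolding zderiv_def Fs using fls_deriv_inv[OF fGnz] by (simp add: fls_deriv_fps_to_fls)
  have L: "Gser \<nu>t = fls_X ^ 2 * fps_to_fls (fps_deriv G) * fps_to_fls H"
    unfolding Gser_def nt G_def[symmetric] H_def[symmetric] N1_def[symmetric]
    by (simp add: fls_times_fps_to_fls power2_eq_square mult_ac)
  show ?thesis unfolding L S Z using fGnz by (simp add: field_simps power2_eq_square)
qed

theorem corollary3p2:
  fixes sa :: "complex \<Rightarrow> 'a::ring_1 \<Rightarrow> 'a" and \<phi> :: "'a \<Rightarrow> complex"
    and sf :: "complex \<Rightarrow> 'f::ring \<Rightarrow> 'f" and lm :: "'a \<Rightarrow> 'f \<Rightarrow> 'f"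
    and rm :: "'f \<Rightarrow> 'a \<Rightarrow> 'f" and \<Phi> :: "'f \<Rightarrow> complex"
    and a :: 'a and f :: 'f
    and \<mu> \<nu> \<nu>t :: "nat \<Rightarrow> complex"
  assumes "ncps_typeB' sa \<phi> sf lm rm \<Phi>"
    and "cyc_antimono_indep lm rm \<phi> \<Phi> (ualg_gen sa a) (alg_gen sf f)"
    and "\<mu> = (\<lambda>n. phiB \<phi> (bpow lm rm (a, 0) n))"
    and "\<nu> = (\<lambda>n. phiB' \<Phi> (bpow lm rm (0, f) n))"
    and "\<nu>t = (\<lambda>n. phiB' \<Phi> (bpow lm rm (a, f) n))"
  shows "(\<lambda>n. phiB \<phi> (bpow lm rm (a, f) n)) = \<mu>
    \<and> (\<forall>(sc :: complex \<Rightarrow> 'c::ring_1 \<Rightarrow> 'c) \<psi> \<psi>' b1 b2.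
          inf_ncps sc \<psi> \<psi>' \<and>
          inf_free \<psi> \<psi>' (\<lambda>i::bool. if i then ualg_gen sc b1 else ualg_gen sc b2) \<and>
          (\<forall>n. \<psi> (b1 ^ n) = \<mu> n \<and> \<psi>' (b1 ^ n) = 0) \<and>
          (\<forall>n. \<psi> (b2 ^ n) = (if n = 0 then 1 else 0) \<and> \<psi>' (b2 ^ n) = \<nu> n)
          \<longrightarrow> (\<lambda>n. \<psi>' ((b1 + b2) ^ n)) = \<nu>t)
    \<and> Gser \<nu>t = subst_z (Gser \<nu>) (Fser \<mu>) * zderiv (Fser \<mu>)"
proof -
  note h = assms
  interpret bs sa \<phi> sf lm rm \<Phi> a f using h(1,2) by unfold_locales
  have muE: "\<mu> = \<mu>B" unfolding h(3) \<mu>B_def phiB_def by (simp add: fst_bpow)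
  have nuE: "\<nu> = \<nu>B" unfolding h(4) \<nu>B_def phiB'_def by simp
  have ntE: "\<And>n. \<nu>t n = sum (val \<mu> \<nu>) (Sw n)"
    unfolding h(5) phiB'_def muE nuE using B_moments by simp
  have P1: "(\<lambda>n. phiB \<phi> (bpow lm rm (a, f) n)) = \<mu>"
    unfolding muE \<mu>B_def phiB_def by (simp add: fst_bpow)
  have P2: "\<forall>(sc :: complex \<Rightarrow> 'c::ring_1 \<Rightarrow> 'c) \<psi> \<psi>' b1 b2.
          inf_ncps sc \<psi> \<psi>' \<and>
          inf_free \<psi> \<psi>' (\<lambda>i::bool. if i then ualg_gen sc b1 else ualg_gen sc b2) \<and>
          (\<forall>n. \<psi> (b1 ^ n) = \<mu> n \<and> \<psi>' (b1 ^ n) = 0) \<and>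
          (\<forall>n. \<psi> (b2 ^ n) = (if n = 0 then 1 else 0) \<and> \<psi>' (b2 ^ n) = \<nu> n)
          \<longrightarrow> (\<lambda>n. \<psi>' ((b1 + b2) ^ n)) = \<nu>t"
  proof (intro allI impI)
    fix sc :: "complex \<Rightarrow> 'c::ring_1 \<Rightarrow> 'c" and \<psi> \<psi>' b1 b2
    assume c: "inf_ncps sc \<psi> \<psi>' \<and>
          inf_free \<psi> \<psi>' (\<lambda>i::bool. if i then ualg_gen sc b1 else ualg_gen sc b2) \<and>
          (\<forall>n. \<psi> (b1 ^ n) = \<mu> n \<and> \<psi>' (b1 ^ n) = 0) \<and>
          (\<forall>n. \<psi> (b2 ^ n) = (if n = 0 then 1 else 0) \<and> \<psi>' (b2 ^ n) = \<nu> n)"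
    interpret F: fr sc \<psi> \<psi>' b1 b2 \<mu> \<nu> using c by unfold_locales auto
    show "(\<lambda>n. \<psi>' ((b1 + b2) ^ n)) = \<nu>t"
      using F.free_moments ntE by auto
  qed
  have mu0: "\<mu> 0 = 1" unfolding muE \<mu>B_def using phi1 by simp
  have nu0: "\<nu> 0 = 0" unfolding nuE \<nu>B_def using cl_0[OF linP] by simp
  have nt: "Abs_fps \<nu>t = fps_X * fps_deriv (fps_X * Abs_fps \<mu>) * (Abs_fps (\<lambda>m. \<nu> (Suc m)) oo (fps_X * Abs_fps \<mu>))"
    by (rule fps_ext) (simp add: ntE comb_main)
  have P3: "Gser \<nu>t = subst_z (Gser \<nu>) (Fser \<mu>) * zderiv (Fser \<mu>)"
    by (rule fls_part[OF mu0 nu0 nt])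
  show ?thesis using P1 P2 P3 by blast
qed

end
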